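(* Let $(X,\mathcal{R})$ be an association scheme with rank $d+1\geq 3$. If some relation $R\in\mathcal{R}$ has a connected scheme graph of valency three, then $(X,\mathcal{R})$ is partially metric with respect to $R$; that is, the set of pairs at distance $2$ in the scheme graph of $R$ is a single relation of $\mathcal{R}$.
   Context: A (symmetric) association scheme with rank $d+1$ on a finite set $X$ is a partition $\mathcal{R}=\{R_0,\dots,R_d\}$ of $X\times X$ with $R_0$ the diagonal, each $R_i$ symmetric, and numbers $p^h_{ij}$ such that for every $(x,y)\in R_h$ the number of $z$ with $(x,z)\in R_i$, $(z,y)\in R_j$ equals $p^h_{ij}$. The scheme graph of $R_i$ ($i>0$) is the graph on $X$ with $x\sim y$ iff $(x,y)\in R_i$. The scheme is partially metric with respect to a connected relation $R_1$ if the distance-$2$ relation of the scheme graph of $R_1$ is a relation of the scheme. *)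

theory Defs
  imports Main
begin

definition assoc_scheme :: "'a set \<Rightarrow> ('a \<times> 'a) set set \<Rightarrow> bool" where
  "assoc_scheme X \<R> \<longleftrightarrow>
     finite X \<and>
     (\<forall>R\<in>\<R>. R \<noteq> {}) \<and>
     \<Union>\<R> = X \<times> X \<and>
     (\<forall>R\<in>\<R>. \<forall>S\<in>\<R>. R \<noteq> S \<longrightarrow> R \<inter> S = {}) \<and>
     Id_on X \<in> \<R> \<and>
     (\<forall>R\<in>\<R>. sym R) \<and>
     (\<forall>Ri\<in>\<R>. \<forall>Rj\<in>\<R>. \<forall>Rh\<in>\<R>. \<exists>p::nat. \<forall>(x,y)\<in>Rh.
        card {z\<in>X. (x,z)\<in>Ri \<and> (z,y)\<in>Rj} = p)"

definition scheme_graph_connected :: "'a set \<Rightarrow> ('a \<times> 'a) set \<Rightarrow> bool" where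
  "scheme_graph_connected X R \<longleftrightarrow> (\<forall>x\<in>X. \<forall>y\<in>X. (x,y) \<in> R\<^sup>*)"

definition scheme_graph_valency :: "'a set \<Rightarrow> ('a \<times> 'a) set \<Rightarrow> nat \<Rightarrow> bool" where
  "scheme_graph_valency X R k \<longleftrightarrow> (\<forall>x\<in>X. card {y. (x,y) \<in> R} = k)"

definition dist2_rel :: "('a \<times> 'a) set \<Rightarrow> ('a \<times> 'a) set" where
  "dist2_rel R = {(x,y). (x,y) \<in> R O R \<and> x \<noteq> y \<and> (x,y) \<notin> R}"

definition partially_metric :: "('a \<times> 'a) set set \<Rightarrow> ('a \<times> 'a) set \<Rightarrow> bool" where
  "partially_metric \<R> R \<longleftrightarrow> dist2_rel R \<in> \<R>"

end

theory Submission imports Defs begin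
lemma three_matching:
  assumes "card A = 3" "\<forall>y\<in>A. card {y'\<in>A. E y y'} = 1"
    "\<forall>y\<in>A. \<forall>y'\<in>A. E y y' \<longrightarrow> E y' y" "\<forall>y\<in>A. \<not> E y y"
  shows False
proof -
  obtain p q r where A: "A = {p,q,r}" "p\<noteq>q" "p\<noteq>r" "q\<noteq>r"
    using assms(1) by (metis card_3_iff)
  have u: "\<And>y. y\<in>A \<Longrightarrow> \<exists>a. {y'\<in>A. E y y'} = {a}"
    using assms(2) by (simp add: card_1_singleton_iff)
  have uq: "\<And>y a b. y\<in>A \<Longrightarrow> a\<in>A \<Longrightarrow> b\<in>A \<Longrightarrow> E y a \<Longrightarrow> E y b \<Longrightarrow> a = b"
  proof -
    fix y a b assume h: "y\<in>A" "a\<in>A" "b\<in>A" "E y a" "E y b"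
    then obtain c where "{y'\<in>A. E y y'} = {c}" using u by blast
    then have "a = c" "b = c" using h by blast+
    then show "a = b" by simp
  qed
  have ex: "\<And>y. y\<in>A \<Longrightarrow> \<exists>a\<in>A. E y a"
  proof -
    fix y assume "y\<in>A"
    then obtain c where "{y'\<in>A. E y y'} = {c}" using u by blast
    then show "\<exists>a\<in>A. E y a" by blast
  qed
  have pA: "p\<in>A" "q\<in>A" "r\<in>A" using A by auto
  have sy: "\<And>a b. a\<in>A \<Longrightarrow> b\<in>A \<Longrightarrow> E a b \<Longrightarrow> E b a" using assms(3) by blast
  have ir: "\<And>a. a\<in>A \<Longrightarrow> \<not> E a a" using assms(4) by blast
  obtain a where a: "a\<in>A" "E p a" using ex pA by blast
  have aqr: "a = q \<or> a = r" using a A ir by auto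
  show False
  proof (cases "a = q")
    case True
    obtain b where b: "b\<in>A" "E r b" using ex pA by blast
    have "b = p \<or> b = q" using b A ir by auto
    then show False
    proof
      assume "b = p" then have "E p r" using b sy pA by blast
      then show False using uq[of p q r] True a pA A by blast
    next
      assume "b = q" then have "E q r" using b sy pA by blast
      moreover have "E q p" using True a sy pA by blast
      ultimately show False using uq[of q p r] pA A by blast
    qed
  next
    case False
    then have ar: "a = r" using aqr by simp
    obtain b where b: "b\<in>A" "E q b" using ex pA by blast
    have "b = p \<or> b = r" using b A ir by auto
    then show False
    proof
      assume "b = p" then have "E p q" using b sy pA by blast
      then show False using uq[of p q r] ar a pA A by blast
    next
      assume "b = r" then have "E r q" using b sy pA by blast
      moreover have "E r p" using ar a sy pA by blast
      ultimately show False using uq[of r p q] pA A by blast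
    qed
  qed
qed

lemma pconst:
  assumes "assoc_scheme X \<R>" "Ri\<in>\<R>" "Rj\<in>\<R>" "Rh\<in>\<R>" "(x,y)\<in>Rh" "(x',y')\<in>Rh"
  shows "card {z\<in>X. (x,z)\<in>Ri \<and> (z,y)\<in>Rj} = card {z\<in>X. (x',z)\<in>Ri \<and> (z,y')\<in>Rj}"
proof -
  from assms(1-4) obtain p where h: "\<forall>(x,y)\<in>Rh. card {z\<in>X. (x,z)\<in>Ri \<and> (z,y)\<in>Rj} = p"
    unfolding assoc_scheme_def by meson
  have "card {z\<in>X. (x,z)\<in>Ri \<and> (z,y)\<in>Rj} = p" using h assms(5) by fast
  moreover have "card {z\<in>X. (x',z)\<in>Ri \<and> (z,y')\<in>Rj} = p" using h assms(6) by fast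
  ultimately show ?thesis by simp
qed

lemma sub_XX: "assoc_scheme X \<R> \<Longrightarrow> S \<in> \<R> \<Longrightarrow> S \<subseteq> X \<times> X"
  unfolding assoc_scheme_def by blast

lemma disj: "assoc_scheme X \<R> \<Longrightarrow> S \<in> \<R> \<Longrightarrow> T \<in> \<R> \<Longrightarrow> p \<in> S \<Longrightarrow> p \<in> T \<Longrightarrow> S = T"
  unfolding assoc_scheme_def by blast

lemma symR: "assoc_scheme X \<R> \<Longrightarrow> S \<in> \<R> \<Longrightarrow> (x,y) \<in> S \<Longrightarrow> (y,x) \<in> S"
  unfolding assoc_scheme_def sym_def by blast

lemma nonempty_rel: "assoc_scheme X \<R> \<Longrightarrow> S \<in> \<R> \<Longrightarrow> \<exists>p. p \<in> S"
proof -
  assume "assoc_scheme X \<R>" "S \<in> \<R>"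
  then have "S \<noteq> {}" unfolding assoc_scheme_def by simp
  then show ?thesis by blast
qed

lemma IdX: "assoc_scheme X \<R> \<Longrightarrow> Id_on X \<in> \<R>"
  unfolding assoc_scheme_def by blast

lemma finX: "assoc_scheme X \<R> \<Longrightarrow> finite X"
  unfolding assoc_scheme_def by blast

lemma cover: "assoc_scheme X \<R> \<Longrightarrow> p \<in> X \<times> X \<Longrightarrow> \<exists>S\<in>\<R>. p \<in> S"
proof -
  assume "assoc_scheme X \<R>" "p \<in> X \<times> X"
  moreover have "\<Union>\<R> = X \<times> X" using \<open>assoc_scheme X \<R>\<close> unfolding assoc_scheme_def by simp
  ultimately show ?thesis by blast
qed

theorem lemma2p3:
  fixes X :: "'a set" and \<R> :: "('a \<times> 'a) set set" and R :: "('a \<times> 'a) set" and d :: nat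
  assumes "assoc_scheme X \<R>"
    and "card \<R> = d + 1" and "d + 1 \<ge> 3"
    and "R \<in> \<R>"
    and "scheme_graph_connected X R"
    and "scheme_graph_valency X R 3"
  shows "partially_metric \<R> R"
proof -
  note as = assms(1)
  define D where "D = dist2_rel R"
  have RX: "R \<subseteq> X \<times> X" using sub_XX[OF as assms(4)] .
  have fin: "finite X" using finX[OF as] .
  have val: "\<And>x. x \<in> X \<Longrightarrow> card {y. (x,y) \<in> R} = 3"
    using assms(6) unfolding scheme_graph_valency_def by blast
  have Dm: "\<And>a b. (a,b) \<in> D \<longleftrightarrow> (a,b) \<in> R O R \<and> a \<noteq> b \<and> (a,b) \<notin> R"
    unfolding D_def dist2_rel_def by blast
  have DX: "D \<subseteq> X \<times> X" using RX unfolding D_def dist2_rel_def by blast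
  have DI: "D \<inter> Id_on X = {}" unfolding D_def dist2_rel_def by blast
  have DR: "D \<inter> R = {}" unfolding D_def dist2_rel_def by blast
  have DRR: "D \<subseteq> R O R" unfolding D_def dist2_rel_def by blast
  have Dne: "D \<noteq> {}"
  proof
    assume D0: "D = {}"
    have RR: "R O R \<subseteq> Id_on X \<union> R"
    proof
      fix p assume p: "p \<in> R O R"
      obtain a b where ab: "p = (a,b)" by (cases p)
      have "a \<in> X" using p ab RX by blast
      then show "p \<in> Id_on X \<union> R" using p ab D0 Dm[of a b] by blast
    qed
    have reach: "\<And>x y. (x,y) \<in> R\<^sup>* \<Longrightarrow> x \<in> X \<Longrightarrow> (x,y) \<in> Id_on X \<union> R"
    proof -
      fix x y assume "(x,y) \<in> R\<^sup>*" "x \<in> X"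
      then show "(x,y) \<in> Id_on X \<union> R"
      proof (induction rule: rtrancl_induct)
        case base then show ?case by blast
      next
        case (step y z)
        then have "(x,y) \<in> Id_on X \<union> R" by blast
        then show ?case
        proof
          assume "(x,y) \<in> Id_on X" then show ?thesis using step by blast
        next
          assume "(x,y) \<in> R" then have "(x,z) \<in> R O R" using step by blast
          then show ?thesis using RR by blast
        qed
      qed
    qed
    have all: "X \<times> X \<subseteq> Id_on X \<union> R"
      using reach assms(5) unfolding scheme_graph_connected_def by blast
    have "\<R> \<subseteq> {Id_on X, R}"
    proof
      fix S assume S: "S \<in> \<R>"
      obtain p where p: "p \<in> S" using nonempty_rel[OF as S] by blast
      have "p \<in> Id_on X \<union> R" using p sub_XX[OF as S] all by blast
      then show "S \<in> {Id_on X, R}"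
        using disj[OF as S IdX[OF as] p] disj[OF as S assms(4) p] by blast
    qed
    then have "card \<R> \<le> card {Id_on X, R}" by (simp add: card_mono)
    also have "\<dots> \<le> 2" by (simp add: card_insert_le_m1)
    finally show False using assms(2,3) by simp
  qed
  have nod: "\<And>S a. S \<in> \<R> \<Longrightarrow> S \<inter> D \<noteq> {} \<Longrightarrow> a \<in> X \<Longrightarrow> (a,a) \<notin> S"
  proof
    fix S a assume S: "S \<in> \<R>" "S \<inter> D \<noteq> {}" "a \<in> X" "(a,a) \<in> S"
    then have "S = Id_on X" using disj[OF as S(1) IdX[OF as], of "(a,a)"] by blast
    then show False using S(2) DI by blast
  qed
  have K: "\<And>S. S \<in> \<R> \<Longrightarrow> S \<inter> D \<noteq> {} \<Longrightarrow> S \<subseteq> D"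
  proof
    fix S q assume S: "S \<in> \<R>" "S \<inter> D \<noteq> {}" and q: "q \<in> S"
    obtain x y where xy: "(x,y) \<in> S" "(x,y) \<in> D" using S(2) by auto
    obtain w where w: "(x,w) \<in> R" "(w,y) \<in> R" using xy(2) DRR by blast
    have "w \<in> {z\<in>X. (x,z)\<in>R \<and> (z,y)\<in>R}" using w RX by blast
    then have c1: "card {z\<in>X. (x,z)\<in>R \<and> (z,y)\<in>R} \<noteq> 0" using fin by auto
    obtain a b where ab: "q = (a,b)" by (cases q)
    have "card {z\<in>X. (a,z)\<in>R \<and> (z,b)\<in>R} \<noteq> 0"
      using c1 pconst[OF as assms(4) assms(4) S(1) xy(1), of a b] q ab by simp
    then have "{z\<in>X. (a,z)\<in>R \<and> (z,b)\<in>R} \<noteq> {}" by (metis card.empty)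
    then obtain z where "(a,z) \<in> R" "(z,b) \<in> R" by blast
    then have 1: "(a,b) \<in> R O R" by blast
    have aX: "a \<in> X" using q ab sub_XX[OF as S(1)] by blast
    have 2: "a \<noteq> b" using nod[OF S aX] q ab by blast
    have 3: "(a,b) \<notin> R"
    proof
      assume "(a,b) \<in> R"
      then have "S = R" using disj[OF as S(1) assms(4)] q ab by blast
      then show False using xy DR by blast
    qed
    show "q \<in> D" using 1 2 3 ab Dm[of a b] by blast
  qed
  have U: "\<And>S1 S2. S1 \<in> \<R> \<Longrightarrow> S2 \<in> \<R> \<Longrightarrow> S1 \<inter> D \<noteq> {} \<Longrightarrow> S2 \<inter> D \<noteq> {} \<Longrightarrow> S1 = S2"
  proof (rule ccontr)
    fix S1 S2 assume S: "S1 \<in> \<R>" "S2 \<in> \<R>" "S1 \<inter> D \<noteq> {}" "S2 \<inter> D \<noteq> {}" "S1 \<noteq> S2"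
    have ge1: "\<And>S x y. S \<in> \<R> \<Longrightarrow> S \<inter> D \<noteq> {} \<Longrightarrow> (x,y) \<in> R \<Longrightarrow>
        card {z\<in>X. (x,z)\<in>S \<and> (z,y)\<in>R} \<ge> 1"
    proof -
      fix S x y assume h: "S \<in> \<R>" "S \<inter> D \<noteq> {}" "(x,y) \<in> R"
      obtain u v where uv: "(u,v) \<in> S" "(u,v) \<in> D" using h(2) by auto
      obtain w where w: "(u,w) \<in> R" "(w,v) \<in> R" using uv(2) DRR by blast
      have "v \<in> {z\<in>X. (u,z)\<in>S \<and> (z,w)\<in>R}"
        using uv w symR[OF as assms(4)] RX by blast
      moreover have "finite {z\<in>X. (u,z)\<in>S \<and> (z,w)\<in>R}" using fin by simp
      ultimately have "card {z\<in>X. (u,z)\<in>S \<and> (z,w)\<in>R} \<noteq> 0" by (metis card_0_eq empty_iff)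
      then have "card {z\<in>X. (u,z)\<in>S \<and> (z,w)\<in>R} \<ge> 1" by simp
      then show "card {z\<in>X. (x,z)\<in>S \<and> (z,y)\<in>R} \<ge> 1"
        using pconst[OF as h(1) assms(4) assms(4) w(1) h(3)] by simp
    qed
    have eq1: "\<And>x y. (x,y) \<in> R \<Longrightarrow> card {z\<in>X. (x,z)\<in>S1 \<and> (z,y)\<in>R} = 1"
    proof -
      fix x y assume xy: "(x,y) \<in> R"
      define B1 where "B1 = {z\<in>X. (x,z)\<in>S1 \<and> (z,y)\<in>R}"
      define B2 where "B2 = {z\<in>X. (x,z)\<in>S2 \<and> (z,y)\<in>R}"
      have xX: "x \<in> X" "y \<in> X" using xy RX by auto
      have sub: "B1 \<union> B2 \<subseteq> {z. (y,z) \<in> R} - {x}"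
        unfolding B1_def B2_def using nod[OF S(1) S(3) xX(1)] nod[OF S(2) S(4) xX(1)]
          symR[OF as assms(4)] by blast
      have finN: "finite {z. (y,z) \<in> R}"
      proof (rule finite_subset[OF _ fin])
        show "{z. (y,z) \<in> R} \<subseteq> X" using RX by blast
      qed
      have "x \<in> {z. (y,z) \<in> R}" using xy symR[OF as assms(4)] by blast
      then have c2: "card ({z. (y,z) \<in> R} - {x}) = 2" using val[OF xX(2)] finN by simp
      have dj: "B1 \<inter> B2 = {}"
        unfolding B1_def B2_def using disj[OF as S(1) S(2)] S(5) by blast
      have fB: "finite B1" "finite B2" unfolding B1_def B2_def using fin by auto
      have "card B1 + card B2 = card (B1 \<union> B2)" using card_Un_disjoint[OF fB dj] by simp
      also have "\<dots> \<le> card ({z. (y,z) \<in> R} - {x})" using sub finN by (intro card_mono) auto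
      also have "\<dots> = 2" using c2 .
      finally have "card B1 + card B2 \<le> 2" .
      moreover have "card B1 \<ge> 1" "card B2 \<ge> 1"
        unfolding B1_def B2_def using ge1[OF S(1) S(3) xy] ge1[OF S(2) S(4) xy] by auto
      ultimately show "card {z\<in>X. (x,z)\<in>S1 \<and> (z,y)\<in>R} = 1" unfolding B1_def by linarith
    qed
    obtain u v where uv: "(u,v) \<in> S1" using S(3) by auto
    have uX: "u \<in> X" using uv sub_XX[OF as S(1)] by blast
    define A where "A = {y. (u,y) \<in> R}"
    have "card A = 3" unfolding A_def using val[OF uX] .
    moreover have "\<forall>y\<in>A. card {y'\<in>A. (y,y') \<in> S1} = 1"
    proof
      fix y assume y: "y \<in> A"
      then have yu: "(y,u) \<in> R" unfolding A_def using symR[OF as assms(4)] by blast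
      have "{y'\<in>A. (y,y') \<in> S1} = {z\<in>X. (y,z)\<in>S1 \<and> (z,u)\<in>R}"
        unfolding A_def using symR[OF as assms(4)] sub_XX[OF as S(1)] by blast
      then show "card {y'\<in>A. (y,y') \<in> S1} = 1" using eq1[OF yu] by simp
    qed
    moreover have "\<forall>y\<in>A. \<forall>y'\<in>A. (y,y') \<in> S1 \<longrightarrow> (y',y) \<in> S1"
      using symR[OF as S(1)] by blast
    moreover have "\<forall>y\<in>A. (y,y) \<notin> S1"
      unfolding A_def using nod[OF S(1) S(3)] RX by blast
    ultimately show False by (rule three_matching[of A "\<lambda>a b. (a,b) \<in> S1"])
  qed
  obtain a b where ab: "(a,b) \<in> D" using Dne by auto
  obtain S where S: "S \<in> \<R>" "(a,b) \<in> S" using cover[OF as] ab DX by blast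
  have SD: "S \<inter> D \<noteq> {}" using S ab by blast
  have "D \<subseteq> S"
  proof
    fix q assume q: "q \<in> D"
    obtain T where T: "T \<in> \<R>" "q \<in> T" using cover[OF as] q DX by blast
    then have "T = S" using U[OF T(1) S(1) _ SD] q by blast
    then show "q \<in> S" using T by simp
  qed
  moreover have "S \<subseteq> D" using K[OF S(1) SD] .
  ultimately have "D = S" by blast
  then show ?thesis unfolding partially_metric_def D_def[symmetric] using S by simp
qed
end
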